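(* For every integer $n\ge1$, $d_n \ge 2^{2^{n-1}}$.
   Context: A delta-matroid $(E,\mathcal F)$ consists of a finite ground set $E$ and a non-empty collection $\mathcal F$ of subsets of $E$ (the feasible sets) satisfying the symmetric exchange axiom: for all $X,Y\in\mathcal F$ and every $e\in X\triangle Y$ there exists $f\in X\triangle Y$ (possibly $f=e$) with $X\triangle\{e,f\}\in\mathcal F$. Let $d_n$ denote the number of labelled delta-matroids with ground set $[n]=\{1,\dots,n\}$, i.e. the number of collections $\mathcal F$ of subsets of $[n]$ such that $([n],\mathcal F)$ is a delta-matroid. *)

theory Defs
  imports Main
begin

definition symdiff :: "'a set \<Rightarrow> 'a set \<Rightarrow> 'a set" where
  "symdiff X Y = (X - Y) \<union> (Y - X)"

definition delta_matroid :: "'a set \<Rightarrow> 'a set set \<Rightarrow> bool" where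
  "delta_matroid E F \<longleftrightarrow> finite E \<and> F \<subseteq> Pow E \<and> F \<noteq> {} \<and>
     (\<forall>X\<in>F. \<forall>Y\<in>F. \<forall>e\<in>symdiff X Y. \<exists>f\<in>symdiff X Y. symdiff X {e, f} \<in> F)"

definition num_delta_matroids :: "nat \<Rightarrow> nat" where
  "num_delta_matroids n = card {F :: nat set set. delta_matroid {1..n} F}"

end

theory Submission
  imports Defs
begin


lemma sd1': "finite X \<Longrightarrow> even (card (symdiff X {e})) \<longleftrightarrow> odd (card X)"
proof (cases "e \<in> X")
  case True
  assume f: "finite X"
  have "symdiff X {e} = X - {e}" using True by (auto simp: symdiff_def)
  moreover have "card X = Suc (card (X - {e}))" using True f by (metis card_Suc_Diff1)
  ultimately show ?thesis by simp
next
  case False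
  assume f: "finite X"
  have "symdiff X {e} = insert e X" using False by (auto simp: symdiff_def)
  then show ?thesis using False f by simp
qed

lemma sd2: "finite X \<Longrightarrow> e \<noteq> f \<Longrightarrow> even (card (symdiff X {e,f})) \<longleftrightarrow> even (card X)"
proof -
  assume f: "finite X" "e \<noteq> f"
  have "symdiff X {e,f} = symdiff (symdiff X {e}) {f}" using f(2) by (auto simp: symdiff_def)
  moreover have "finite (symdiff X {e})" using f by (simp add: symdiff_def)
  ultimately show ?thesis using sd1'[OF f(1), of e] sd1'[of "symdiff X {e}" f] by simp
qed

lemma dm:
  assumes "G \<subseteq> {X \<in> Pow {1..(n::nat)}. odd (card X)}"
  shows "delta_matroid {1..n} ({X \<in> Pow {1..n}. even (card X)} \<union> G)"
  unfolding delta_matroid_def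
proof (intro conjI ballI)
  show "finite {1..n}" by simp
  show "{X \<in> Pow {1..n}. even (card X)} \<union> G \<subseteq> Pow {1..n}" using assms by auto
  show "{X \<in> Pow {1..n}. even (card X)} \<union> G \<noteq> {}" by auto
next
  fix X Y e
  assume X: "X \<in> {X \<in> Pow {1..n}. even (card X)} \<union> G"
    and Y: "Y \<in> {X \<in> Pow {1..n}. even (card X)} \<union> G" and e: "e \<in> symdiff X Y"
  have XP: "X \<subseteq> {1..n}" "Y \<subseteq> {1..n}" using X Y assms by auto
  have fX: "finite X" using XP finite_subset by blast
  have eE: "e \<in> {1..n}" using e XP by (auto simp: symdiff_def)
  show "\<exists>f\<in>symdiff X Y. symdiff X {e, f} \<in> {X \<in> Pow {1..n}. even (card X)} \<union> G"
  proof (cases "even (card X)")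
    case False
    have "symdiff X {e,e} \<in> Pow {1..n}" using XP eE by (auto simp: symdiff_def)
    moreover have "even (card (symdiff X {e,e}))" using sd1'[OF fX, of e] False by simp
    ultimately show ?thesis using e by blast
  next
    case True
    show ?thesis
    proof (cases "symdiff X Y = {e}")
      case True
      have "symdiff X {e,e} = Y" using True by (auto simp: symdiff_def)
      then show ?thesis using Y True by auto
    next
      case False
      then obtain f where f: "f \<in> symdiff X Y" "f \<noteq> e" using e by blast
      have fE: "f \<in> {1..n}" using f XP by (auto simp: symdiff_def)
      have "symdiff X {e,f} \<in> Pow {1..n}" using XP eE fE by (auto simp: symdiff_def)
      moreover have "even (card (symdiff X {e,f}))" using sd2[OF fX, of e f] f True by auto
      ultimately show ?thesis using f by auto
    qed
  qed
qed

lemma odd_count: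
  assumes "n \<ge> 1"
  shows "2 ^ (n - 1) \<le> card {X \<in> Pow {1..(n::nat)}. odd (card X)}"
proof -
  define h where "h = (\<lambda>A. if odd (card A) then A else insert n A)"
  have "inj_on h (Pow {1..n-1})"
  proof
    fix A B assume A: "A \<in> Pow {1..n-1}" and B: "B \<in> Pow {1..n-1}" and eq: "h A = h B"
    have nA: "n \<notin> A" "n \<notin> B" using A B assms by auto
    have "A = h A - {n}" "B = h B - {n}" using nA by (auto simp: h_def)
    then show "A = B" using eq by simp
  qed
  moreover have "h ` Pow {1..n-1} \<subseteq> {X \<in> Pow {1..n}. odd (card X)}"
  proof
    fix X assume "X \<in> h ` Pow {1..n-1}"
    then obtain A where A: "A \<subseteq> {1..n-1}" "X = h A" by auto
    have fA: "finite A" using A finite_subset by blast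
    have nA: "n \<notin> A" using A assms by auto
    have "{1..n-1} \<subseteq> {1..n}" by auto
    then have As: "A \<subseteq> {1..n}" using A(1) by (rule subset_trans[rotated])
    have nn: "n \<in> {1..n}" using assms by simp
    show "X \<in> {X \<in> Pow {1..n}. odd (card X)}"
    proof (cases "odd (card A)")
      case True
      then show ?thesis using A(2) As by (simp add: h_def)
    next
      case False
      then have "X = insert n A" using A(2) by (simp add: h_def)
      then show ?thesis using False As nn fA nA by simp
    qed
  qed
  moreover have "finite {X \<in> Pow {1..n}. odd (card X)}" by simp
  ultimately have c1: "card (h ` Pow {1..n-1}) \<le> card {X \<in> Pow {1..n}. odd (card X)}"
    and c2: "card (h ` Pow {1..n-1}) = card (Pow {1..n-1})"
    by (meson card_mono, meson card_image)
  from c1 c2 have "card (Pow {1..n-1}) \<le> card {X \<in> Pow {1..n}. odd (card X)}" by linarith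
  then show ?thesis by (simp add: card_Pow)
qed

theorem corollary3p3:
  fixes n :: nat
  assumes "n \<ge> 1"
  shows "num_delta_matroids n \<ge> 2 ^ (2 ^ (n - 1))"
proof -
  define Ev where "Ev = {X \<in> Pow {1..n}. even (card X)}"
  define Od where "Od = {X \<in> Pow {1..n}. odd (card X)}"
  have fOd: "finite Od" unfolding Od_def by simp
  have "inj_on (\<lambda>G. Ev \<union> G) (Pow Od)"
  proof
    fix A B assume "A \<in> Pow Od" "B \<in> Pow Od" "Ev \<union> A = Ev \<union> B"
    moreover have "Ev \<inter> Od = {}" unfolding Ev_def Od_def by auto
    ultimately show "A = B" by blast
  qed
  moreover have "(\<lambda>G. Ev \<union> G) ` Pow Od \<subseteq> {F :: nat set set. delta_matroid {1..n} F}"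
    using dm unfolding Ev_def Od_def by blast
  moreover have "finite {F :: nat set set. delta_matroid {1..n} F}"
    by (rule finite_subset[of _ "Pow (Pow {1..n})"]) (auto simp: delta_matroid_def)
  ultimately have c1: "card ((\<lambda>G. Ev \<union> G) ` Pow Od) \<le> num_delta_matroids n"
    and c2: "card ((\<lambda>G. Ev \<union> G) ` Pow Od) = card (Pow Od)"
    unfolding num_delta_matroids_def by (meson card_mono, meson card_image)
  from c1 c2 have "card (Pow Od) \<le> num_delta_matroids n" by linarith
  then have "2 ^ card Od \<le> num_delta_matroids n" using fOd by (simp add: card_Pow)
  moreover have "(2::nat) ^ (2 ^ (n - 1)) \<le> 2 ^ card Od"
    using odd_count[OF assms] unfolding Od_def by (simp add: power_increasing)
  ultimately show ?thesis by linarith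
qed

end
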